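(* Let $G=(V,E)$ be a finite connected graph, $q\ge1$ and $0\le p\le p'\le1$. Then $\mathbb P^{G,p}\preceq\mathbb P^{G,p'}$, i.e. $\mathbb P^{G,p}(A)\le\mathbb P^{G,p'}(A)$ for every increasing event $A\subset\{1,q\}^E$.
   Context: Graph Laplacian for $c:E\to(0,\infty)$: $\Delta_cf(x)=\sum_{e=\{x,y\}\in E}c_e(f(x)-f(y))$ on $H_0=\{f:V\to\mathbb R:\sum_xf(x)=0\}$, determinant $\det\Delta_c>0$. For $\kappa\in\{1,q\}^E$: $h(\kappa)=\#\{e:\kappa_e=q\}$, $s(\kappa)=\#\{e:\kappa_e=1\}$. $\mathbb P^{G,p}(\kappa)=Z^{-1}p^{h(\kappa)}(1-p)^{s(\kappa)}(\det\Delta_\kappa)^{-1/2}$ (with convention $0^0=1$). An event is increasing if its indicator is increasing for the coordinatewise order ($1<q$). *)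

theory Defs
  imports "HOL-Analysis.Analysis"
begin

definition graph :: "'v set set \<Rightarrow> bool" where
  "graph E \<longleftrightarrow> (\<forall>e\<in>E. card e = 2)"

definition adj :: "'v set set \<Rightarrow> 'v \<Rightarrow> 'v \<Rightarrow> bool" where
  "adj E x y \<longleftrightarrow> {x, y} \<in> E"

definition connected_graph :: "'v set set \<Rightarrow> bool" where
  "connected_graph E \<longleftrightarrow> graph E \<and> (\<forall>x y. (adj E)\<^sup>*\<^sup>* x y)"

text \<open>Matrix of the weighted graph Laplacian
  (Delta_c f)(x) = sum over edges e = {x,y} of c_e (f x - f y).\<close>
definition laplacian :: "'v::finite set set \<Rightarrow> ('v set \<Rightarrow> real) \<Rightarrow> real^'v^'v" where
  "laplacian E c = (\<chi> x y. if x = y then (\<Sum>e\<in>{e\<in>E. x \<in> e}. c e)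
                          else - (if {x, y} \<in> E then c {x, y} else 0))"

text \<open>Determinant of Delta_c restricted to H0 = {f. sum f = 0}.  Delta_c is symmetric,
  kills constants and maps H0 into H0; extending its restriction to H0 by the identity on
  the constants gives the operator Delta_c + (1/|V|) J (J the all-ones matrix), whose
  determinant is det(Delta_c restricted to H0).\<close>
definition detH0 :: "'v::finite set set \<Rightarrow> ('v set \<Rightarrow> real) \<Rightarrow> real" where
  "detH0 E c = det (laplacian E c + (\<chi> x y. 1 / real CARD('v)))"

text \<open>Configurations: omega e = True means kappa_e = q, False means kappa_e = 1.
  Edges outside E are fixed to False.  Pointwise order on bool functions is the
  coordinatewise order with 1 < q.\<close>
definition configs :: "'v set set \<Rightarrow> ('v set \<Rightarrow> bool) set" where
  "configs E = {\<omega>. \<forall>e. e \<notin> E \<longrightarrow> \<not> \<omega> e}"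

definition kappa :: "real \<Rightarrow> ('v set \<Rightarrow> bool) \<Rightarrow> 'v set \<Rightarrow> real" where
  "kappa q \<omega> e = (if \<omega> e then q else 1)"

definition weight :: "'v::finite set set \<Rightarrow> real \<Rightarrow> real \<Rightarrow> ('v set \<Rightarrow> bool) \<Rightarrow> real" where
  "weight E q p \<omega> = p ^ card {e\<in>E. \<omega> e} * (1 - p) ^ card {e\<in>E. \<not> \<omega> e}
      / sqrt (detH0 E (kappa q \<omega>))"

definition prob_event :: "'v::finite set set \<Rightarrow> real \<Rightarrow> real \<Rightarrow> ('v set \<Rightarrow> bool) set \<Rightarrow> real" where
  "prob_event E q p A = (\<Sum>\<omega>\<in>A \<inter> configs E. weight E q p \<omega>) / (\<Sum>\<omega>\<in>configs E. weight E q p \<omega>)"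

definition increasing_event :: "'v set set \<Rightarrow> ('v set \<Rightarrow> bool) set \<Rightarrow> bool" where
  "increasing_event E A \<longleftrightarrow> A \<subseteq> configs E \<and>
     (\<forall>\<omega>\<in>A. \<forall>\<omega>'\<in>configs E. \<omega> \<le> \<omega>' \<longrightarrow> \<omega>' \<in> A)"

end

theory Submission
  imports Defs
begin


lemma four_one:
  fixes a0 a1 b0 b1 c0 c1 d0 d1 :: real
  assumes nn: "0 \<le> a0" "0 \<le> a1" "0 \<le> b0" "0 \<le> b1" "0 \<le> c0" "0 \<le> c1" "0 \<le> d0" "0 \<le> d1"
    and h00: "a0*b0 \<le> c0*d0" and h01: "a0*b1 \<le> c1*d0" and h10: "a1*b0 \<le> c1*d0"
    and h11: "a1*b1 \<le> c1*d1"
  shows "(a0+a1)*(b0+b1) \<le> (c0+c1)*(d0+d1)"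
proof (cases "c1*d0 = 0")
  case True
  have "a0*b1 = 0" using h01 True mult_nonneg_nonneg[OF nn(1) nn(4)] by linarith
  moreover have "a1*b0 = 0" using h10 True mult_nonneg_nonneg[OF nn(2) nn(3)] by linarith
  moreover have "(a0+a1)*(b0+b1) = a0*b0 + a1*b1 + a0*b1 + a1*b0" by (simp add: algebra_simps)
  ultimately have "(a0+a1)*(b0+b1) = a0*b0 + a1*b1" by linarith
  also have "\<dots> \<le> c0*d0 + c1*d1" using h00 h11 by simp
  also have "\<dots> \<le> (c0+c1)*(d0+d1)" using nn by (simp add: algebra_simps)
  finally show ?thesis .
next
  case False
  define z where "z = c1*d0"
  have zpos: "z > 0" using False nn unfolding z_def by (simp add: less_le)
  have "z*((c0+c1)*(d0+d1)) = (c0*d0 + z)*(z + c1*d1)" unfolding z_def by (simp add: algebra_simps)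
  also have "\<dots> \<ge> (a0*b0 + z)*(z + a1*b1)"
    by (rule mult_mono[OF add_mono[OF h00 order_refl] add_mono[OF order_refl h11]])
      (use zpos nn in auto)
  finally have 1: "(a0*b0 + z)*(z + a1*b1) \<le> z*((c0+c1)*(d0+d1))" .
  have "(a0*b0 + z)*(z + a1*b1) - z*((a0+a1)*(b0+b1)) = (z - a0*b1)*(z - a1*b0)"
    by (simp add: algebra_simps)
  also have "\<dots> \<ge> 0" using h01 h10 unfolding z_def by simp
  finally have "z*((a0+a1)*(b0+b1)) \<le> z*((c0+c1)*(d0+d1))" using 1 by linarith
  then show ?thesis using zpos by simp
qed

lemma sum_Pow_insert:
  assumes "finite N" "x \<notin> N"
  shows "(\<Sum>S\<in>Pow (insert x N). f S) = (\<Sum>S\<in>Pow N. f S + f (insert x S))"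
proof -
  have d: "Pow N \<inter> insert x ` Pow N = {}" using assms by auto
  have i: "inj_on (insert x) (Pow N)" using assms by (auto simp: inj_on_def)
  show ?thesis
    unfolding Pow_insert sum.union_disjoint[OF finite_Pow_iff[THEN iffD2, OF assms(1)] finite_imageI[OF finite_Pow_iff[THEN iffD2, OF assms(1)]] d]
    sum.reindex[OF i] sum.distrib by simp
qed

lemma four_functions:
  fixes \<alpha> \<beta> \<gamma> \<delta> :: "'a set \<Rightarrow> real"
  assumes "finite N"
    and "\<And>S. S \<subseteq> N \<Longrightarrow> 0 \<le> \<alpha> S" "\<And>S. S \<subseteq> N \<Longrightarrow> 0 \<le> \<beta> S"
    "\<And>S. S \<subseteq> N \<Longrightarrow> 0 \<le> \<gamma> S" "\<And>S. S \<subseteq> N \<Longrightarrow> 0 \<le> \<delta> S"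
    and "\<And>S T. S \<subseteq> N \<Longrightarrow> T \<subseteq> N \<Longrightarrow> \<alpha> S * \<beta> T \<le> \<gamma> (S \<union> T) * \<delta> (S \<inter> T)"
  shows "(\<Sum>S\<in>Pow N. \<alpha> S) * (\<Sum>S\<in>Pow N. \<beta> S) \<le> (\<Sum>S\<in>Pow N. \<gamma> S) * (\<Sum>S\<in>Pow N. \<delta> S)"
  using assms
proof (induction N arbitrary: \<alpha> \<beta> \<gamma> \<delta> rule: finite_induct)
  case empty
  then show ?case by simp
next
  case (insert x N)
  let ?a = "\<lambda>S. \<alpha> S + \<alpha> (insert x S)"
  let ?b = "\<lambda>S. \<beta> S + \<beta> (insert x S)"
  let ?c = "\<lambda>S. \<gamma> S + \<gamma> (insert x S)"
  let ?d = "\<lambda>S. \<delta> S + \<delta> (insert x S)"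
  have "(\<Sum>S\<in>Pow N. ?a S) * (\<Sum>S\<in>Pow N. ?b S) \<le> (\<Sum>S\<in>Pow N. ?c S) * (\<Sum>S\<in>Pow N. ?d S)"
  proof (rule insert.IH)
    fix S assume S: "S \<subseteq> N"
    then have S': "S \<subseteq> insert x N" "insert x S \<subseteq> insert x N" by auto
    show "0 \<le> ?a S" "0 \<le> ?b S" "0 \<le> ?c S" "0 \<le> ?d S"
      using insert.prems(1-4)[OF S'(1)] insert.prems(1-4)[OF S'(2)] by auto
  next
    fix S T assume S: "S \<subseteq> N" and T: "T \<subseteq> N"
    have xS: "x \<notin> S" "x \<notin> T" using S T insert.hyps by auto
    have SI: "S \<subseteq> insert x N" "insert x S \<subseteq> insert x N" "T \<subseteq> insert x N" "insert x T \<subseteq> insert x N"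
      "S \<inter> T \<subseteq> insert x N" "insert x (S \<inter> T) \<subseteq> insert x N"
      "S \<union> T \<subseteq> insert x N" "insert x (S \<union> T) \<subseteq> insert x N"
      using S T by auto
    have e1: "S \<inter> insert x T = S \<inter> T" "insert x S \<inter> T = S \<inter> T"
      "insert x S \<inter> insert x T = insert x (S \<inter> T)" using xS by auto
    have e2: "S \<union> insert x T = insert x (S \<union> T)" "insert x S \<union> T = insert x (S \<union> T)"
      "insert x S \<union> insert x T = insert x (S \<union> T)" by auto
    show "?a S * ?b T \<le> ?c (S \<union> T) * ?d (S \<inter> T)"
      apply (rule four_one)
      using insert.prems(1-4) SI insert.prems(5)[of S T] insert.prems(5)[of S "insert x T"]
        insert.prems(5)[of "insert x S" T] insert.prems(5)[of "insert x S" "insert x T"] S T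
      by (auto simp: e1 e2)
  qed
  then show ?case using sum_Pow_insert[OF insert.hyps, of \<alpha>] sum_Pow_insert[OF insert.hyps, of \<beta>]
    sum_Pow_insert[OF insert.hyps, of \<gamma>] sum_Pow_insert[OF insert.hyps, of \<delta>] by simp
qed



lemma det_row_affine:
  fixes C :: "'n::finite \<Rightarrow> real^'n"
  shows "det (\<chi> i. if i = k then u + t *s v else C i) =
     det (\<chi> i. if i = k then u else C i) + t * det (\<chi> i. if i = k then v else C i)"
  using det_row_add[of k "\<lambda>_. u" "\<lambda>_. t *s v" C] det_row_mul[of k t "\<lambda>_. v" C] by simp

lemma rank_one_det:
  fixes M :: "real^'n::finite^'n"
  assumes ab: "a \<noteq> b"
  defines "bv \<equiv> (\<chi> j. if j = a then 1 else if j = b then -1 else 0) :: real^'n"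
  shows "det (M + t *\<^sub>R (\<chi> i j. bv$i * bv$j)) = det M + t * (det (\<chi> i. if i = a then bv else row i M) - det (\<chi> i. if i = b then bv else row i M))"
proof -
  have bva: "bv$a = 1" and bvb: "bv$b = -1" using ab by (simp_all add: bv_def)
  have bvo: "i \<noteq> a \<Longrightarrow> i \<noteq> b \<Longrightarrow> bv$i = 0" for i by (simp add: bv_def)
  have e0: "M + t *\<^sub>R (\<chi> i j. bv$i * bv$j) = (\<chi> i. if i = a then row a M + t *s bv
      else (if i = b then row b M + (-t) *s bv else row i M))"
  proof -
    have "(M + t *\<^sub>R (\<chi> i j. bv$i * bv$j))$i$j = (\<chi> i. if i = a then row a M + t *s bv
      else (if i = b then row b M + (-t) *s bv else row i M))$i$j" for i j
      using ab by (cases "i = a"; cases "i = b") (auto simp: row_def bva bvb bvo)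
    then show ?thesis by (simp add: vec_eq_iff)
  qed
  have e1: "(\<chi> i. if i = a then row a M else (if i = b then row b M + (-t) *s bv else row i M))
      = (\<chi> i. if i = b then row b M + (-t) *s bv else row i M)"
    using ab by (auto simp: vec_eq_iff)
  have e2: "(\<chi> i. if i = a then bv else (if i = b then row b M + (-t) *s bv else row i M))
      = (\<chi> i. if i = b then row b M + (-t) *s bv else (if i = a then bv else row i M))"
    using ab by (auto simp: vec_eq_iff)
  have e3: "(\<chi> i. if i = b then row b M else (if i = a then bv else row i M))
      = (\<chi> i. if i = a then bv else row i M)"
    using ab by (auto simp: vec_eq_iff)
  have e4: "det (\<chi> i. if i = b then bv else (if i = a then bv else row i M)) = 0"
    by (rule det_identical_rows[OF ab]) (auto simp: row_def vec_eq_iff)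
  have e5: "(\<chi> i. if i = b then row b M else row i M) = M"
    by (auto simp: vec_eq_iff row_def)
  show ?thesis
    unfolding e0 det_row_affine e1 e2 e3 e4 e5 by (simp add: algebra_simps)
qed

lemma scaleR_mat_vec: "((c::real) *\<^sub>R (A::real^'n::finite^'m)) *v x = c *\<^sub>R (A *v x)"
  by (simp add: vec_eq_iff matrix_vector_mult_def sum_distrib_left algebra_simps)

definition pdm :: "real^'n::finite^'n \<Rightarrow> bool" where
  "pdm M \<longleftrightarrow> (\<forall>x. x \<noteq> 0 \<longrightarrow> 0 < x \<bullet> (M *v x))"

lemma pdm_det_nz:
  assumes "pdm M" shows "det M \<noteq> 0"
proof -
  have "\<forall>x. M *v x = 0 \<longrightarrow> x = 0" using assms unfolding pdm_def
    by (metis inner_zero_right less_irrefl)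
  then have "\<exists>B. B ** M = mat 1" using matrix_left_invertible_ker by blast
  then have "invertible M" using invertible_left_inverse by blast
  then show ?thesis using invertible_det_nz by blast
qed

lemma pdm_solve:
  assumes "pdm M" shows "\<exists>z. M *v z = b"
proof -
  have "invertible M" using pdm_det_nz[OF assms] invertible_det_nz by blast
  then obtain B where "M ** B = mat 1" unfolding invertible_def by blast
  then have "M *v (B *v b) = b" by (metis matrix_vector_mul_assoc matrix_vector_mul_lid)
  then show ?thesis by blast
qed

lemma continuous_on_det:
  fixes A :: "real \<Rightarrow> real^'n::finite^'n"
  assumes "\<And>i j. continuous_on S (\<lambda>t. A t $ i $ j)"
  shows "continuous_on S (\<lambda>t. det (A t))"
  unfolding det_def by (intro continuous_on_sum continuous_on_mult_left continuous_on_prod assms)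

lemma pdm_det_pos:
  fixes M :: "real^'n::finite^'n"
  assumes "pdm M" shows "det M > 0"
proof (rule ccontr)
  assume "\<not> det M > 0"
  define f where "f t = det ((1 - t) *\<^sub>R mat 1 + t *\<^sub>R M)" for t
  have c: "continuous_on {0..1} f" unfolding f_def
    by (rule continuous_on_det) (auto intro!: continuous_intros simp: mat_def)
  have "f 1 \<le> 0" "0 \<le> f 0" using \<open>\<not> det M > 0\<close> by (auto simp: f_def)
  then obtain t where t: "0 \<le> t" "t \<le> 1" "f t = 0" using IVT2'[of f 1 0 0] c by auto
  have "pdm ((1 - t) *\<^sub>R mat 1 + t *\<^sub>R M)" unfolding pdm_def
  proof (intro allI impI)
    fix x :: "real^'n" assume "x \<noteq> 0"
    then have x0: "0 < x \<bullet> x" by simp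
    have m: "0 < x \<bullet> (M *v x)" using assms \<open>x \<noteq> 0\<close> unfolding pdm_def by blast
    have "x \<bullet> (((1 - t) *\<^sub>R mat 1 + t *\<^sub>R M) *v x) = (1 - t) * (x \<bullet> x) + t * (x \<bullet> (M *v x))"
      by (simp add: algebra_simps inner_add_right scaleR_mat_vec)
    also have "\<dots> > 0"
    proof (cases "t = 1")
      case True then show ?thesis using m by simp
    next
      case False then show ?thesis using t x0 m
        by (intro add_pos_nonneg) (auto intro: mult_pos_pos mult_nonneg_nonneg)
    qed
    finally show "0 < x \<bullet> (((1 - t) *\<^sub>R mat 1 + t *\<^sub>R M) *v x)" .
  qed
  then show False using pdm_det_nz t(3) unfolding f_def by blast
qed

lemma sym_inner:
  fixes M :: "real^'n::finite^'n"
  assumes "transpose M = M"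
  shows "x \<bullet> (M *v y) = (M *v x) \<bullet> y"
  by (metis assms dot_lmul_matrix inner_commute transpose_matrix_vector)

lemma cramer_row:
  fixes M :: "real^'n::finite^'n"
  assumes "transpose M = M" "M *v z = b"
  shows "det (\<chi> i. if i = k then b else row i M) = z$k * det M"
proof -
  have "(\<chi> i. if i = k then b else row i M) = transpose (\<chi> i j. if j = k then (M *v z)$i else M$i$j)"
    using assms(2) assms(1)[unfolded transpose_def, symmetric]
    by (auto simp: vec_eq_iff transpose_def row_def)
  then show ?thesis using cramer_lemma[where A=M and k=k and x=z] by simp
qed

lemma variational:
  fixes M M' :: "real^'n::finite^'n"
  assumes "transpose M = M" "pdm M" "\<And>x. x \<bullet> (M *v x) \<le> x \<bullet> (M' *v x)"
    and "M *v z = b" "M' *v z' = b"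
  shows "b \<bullet> z' \<le> b \<bullet> z"
proof -
  have "0 \<le> (z - z') \<bullet> (M *v (z - z'))" using assms(2) unfolding pdm_def
    by (cases "z - z' = 0") (auto simp: less_imp_le)
  also have "\<dots> = z \<bullet> (M *v z) - 2 * (z' \<bullet> (M *v z)) + z' \<bullet> (M *v z')"
    using sym_inner[OF assms(1), of z' z]
    by (simp add: matrix_vector_mult_diff_distrib inner_diff_left inner_diff_right inner_commute)
  also have "\<dots> = b \<bullet> z - 2 * (b \<bullet> z') + z' \<bullet> (M *v z')"
    using assms(4) by (simp add: inner_commute)
  also have "\<dots> \<le> b \<bullet> z - 2 * (b \<bullet> z') + z' \<bullet> (M' *v z')" using assms(3) by simp
  also have "\<dots> = b \<bullet> z - b \<bullet> z'" using assms(5) by (simp add: inner_commute)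
  finally show ?thesis by simp
qed



definition Bm :: "'v::finite set \<Rightarrow> real^'v^'v" where
  "Bm e = (\<chi> i j. if i \<in> e \<and> j \<in> e then (if i = j then 1 else -1) else 0)"

definition Jn :: "real^'v::finite^'v" where
  "Jn = (\<chi> x y. 1 / real CARD('v))"

definition bvec :: "'v::finite \<Rightarrow> 'v \<Rightarrow> real^'v" where
  "bvec a b = (\<chi> j. if j = a then 1 else if j = b then -1 else 0)"

lemma bvec_axis: "a \<noteq> b \<Longrightarrow> bvec a b = axis a 1 - axis b 1"
  by (auto simp: vec_eq_iff bvec_def axis_def)

lemma bvec_inner: "a \<noteq> b \<Longrightarrow> bvec a b \<bullet> x = x$a - x$b"
  by (simp add: bvec_axis inner_diff_left inner_commute[of "axis _ _"] inner_axis)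

lemma Bm_outer: "a \<noteq> b \<Longrightarrow> Bm {a,b} = (\<chi> i j. bvec a b $ i * bvec a b $ j)"
  by (auto simp: vec_eq_iff Bm_def bvec_def)

lemma outer_mult: "(\<chi> i j. u$i * u$j) *v x = (u \<bullet> x) *\<^sub>R (u::real^'v::finite)"
  by (simp add: vec_eq_iff matrix_vector_mult_def inner_vec_def sum_distrib_left algebra_simps)

lemma quad_Bm: "a \<noteq> b \<Longrightarrow> x \<bullet> (Bm {a,b} *v x) = (x$a - x$b)^2"
  by (simp add: Bm_outer outer_mult bvec_inner inner_commute[of x] power2_eq_square)

lemma quad_Jn: "(x::real^'v::finite) \<bullet> (Jn *v x) = (\<Sum>i\<in>UNIV. x$i)^2 / real CARD('v)"
proof -
  have "Jn *v x = ((\<Sum>i\<in>UNIV. x$i) / real CARD('v)) *\<^sub>R (\<chi> i. 1)"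
    by (simp add: vec_eq_iff Jn_def matrix_vector_mult_def sum_divide_distrib)
  then show ?thesis
    by (simp add: inner_vec_def power2_eq_square sum_distrib_left sum_distrib_right sum_divide_distrib algebra_simps)
qed

lemma sum_mat_vec: "(sum f S) *v x = (\<Sum>e\<in>S. f e *v (x::real^'v::finite))"
  by (simp add: vec_eq_iff matrix_vector_mult_def sum_distrib_right sum.swap[of _ S])

lemma card2_edge: "card e = 2 \<Longrightarrow> \<exists>a b. e = {a,b} \<and> a \<noteq> b"
  by (simp add: card_2_iff)

lemma lap_sum:
  fixes E :: "'v::finite set set"
  assumes "graph E"
  shows "laplacian E c = (\<Sum>e\<in>E. c e *\<^sub>R Bm e)"
proof -
  have fin: "finite E" by simp
  have "laplacian E c $ i $ j = (\<Sum>e\<in>E. c e *\<^sub>R Bm e) $ i $ j" for i j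
  proof (cases "i = j")
    case True
    have "(\<Sum>e\<in>E. c e * Bm e $ i $ j) = (\<Sum>e\<in>E. if i \<in> e then c e else 0)"
      using True by (intro sum.cong) (auto simp: Bm_def)
    also have "\<dots> = (\<Sum>e\<in>{e\<in>E. i \<in> e}. c e)" by (simp add: sum.inter_filter)
    finally show ?thesis using True by (simp add: laplacian_def)
  next
    case False
    have "(\<Sum>e\<in>E. c e * Bm e $ i $ j) = (\<Sum>e\<in>E. if e = {i,j} then - c e else 0)"
    proof (intro sum.cong refl)
      fix e assume "e \<in> E"
      then have "card e = 2" using assms by (auto simp: graph_def)
      then obtain a b where ab: "e = {a,b}" "a \<noteq> b" using card2_edge by blast
      show "c e * Bm e $ i $ j = (if e = {i,j} then - c e else 0)"
        using False ab by (auto simp: Bm_def doubleton_eq_iff)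
    qed
    also have "\<dots> = - (if {i,j} \<in> E then c {i,j} else 0)"
      by (simp add: sum.delta')
    finally show ?thesis using False by (simp add: laplacian_def)
  qed
  then show ?thesis by (simp add: vec_eq_iff)
qed

lemma lap_sym: "transpose (laplacian E c + Jn) = laplacian E c + Jn"
  by (auto simp: vec_eq_iff transpose_def laplacian_def Jn_def insert_commute)

lemma quad_lap:
  fixes E :: "'v::finite set set"
  assumes "graph E"
  shows "x \<bullet> ((laplacian E c + Jn) *v x) = (\<Sum>e\<in>E. c e * (x \<bullet> (Bm e *v x))) + (\<Sum>i\<in>UNIV. x$i)^2 / real CARD('v)"
  unfolding lap_sum[OF assms] matrix_vector_mult_add_rdistrib inner_add_right sum_mat_vec
    inner_sum_right scaleR_mat_vec quad_Jn by simp

lemma quad_Bm_nonneg: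
  assumes "graph E" "e \<in> E" shows "0 \<le> x \<bullet> (Bm e *v x)"
proof -
  obtain a b where "e = {a,b}" "a \<noteq> b" using assms card2_edge by (force simp: graph_def)
  then show ?thesis by (simp add: quad_Bm)
qed

lemma lap_pdm:
  fixes E :: "'v::finite set set"
  assumes conn: "connected_graph E" and cpos: "\<And>e. e \<in> E \<Longrightarrow> 0 < c e"
  shows "pdm (laplacian E c + Jn)"
  unfolding pdm_def
proof (intro allI impI)
  fix x :: "real^'v" assume x: "x \<noteq> 0"
  have g: "graph E" using conn by (simp add: connected_graph_def)
  have t: "0 \<le> c e * (x \<bullet> (Bm e *v x))" if "e \<in> E" for e
    using cpos[OF that] quad_Bm_nonneg[OF g that] by simp
  show "0 < x \<bullet> ((laplacian E c + Jn) *v x)"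
  proof (rule ccontr)
    assume "\<not> ?thesis"
    then have le: "(\<Sum>e\<in>E. c e * (x \<bullet> (Bm e *v x))) + (\<Sum>i\<in>UNIV. x$i)^2 / real CARD('v) \<le> 0"
      using quad_lap[OF g] by simp
    have s1: "0 \<le> (\<Sum>e\<in>E. c e * (x \<bullet> (Bm e *v x)))" using t by (simp add: sum_nonneg)
    have s2: "0 \<le> (\<Sum>i\<in>UNIV. x$i)^2 / real CARD('v)" by simp
    have z1: "(\<Sum>e\<in>E. c e * (x \<bullet> (Bm e *v x))) = 0" using le s1 s2 by linarith
    have z2: "(\<Sum>i\<in>UNIV. x$i)^2 / real CARD('v) = 0" using le s1 s2 by linarith
    have each: "c e * (x \<bullet> (Bm e *v x)) = 0" if "e \<in> E" for e
      using z1 t sum_nonneg_eq_0_iff[of E "\<lambda>e. c e * (x \<bullet> (Bm e *v x))"] that by simp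
    have adjeq: "x$u = x$v" if "adj E u v" for u v
    proof -
      have uv: "{u,v} \<in> E" using that by (simp add: adj_def)
      then have "card {u,v} = 2" using g by (simp add: graph_def)
      then have "u \<noteq> v" by auto
      have "c {u,v} * (x$u - x$v)^2 = 0" using each[OF uv] quad_Bm[OF \<open>u \<noteq> v\<close>] by simp
      then show ?thesis using cpos[OF uv] by simp
    qed
    obtain u :: 'v where True by blast
    have allu: "x$v = x$u" for v
    proof -
      have "(adj E)\<^sup>*\<^sup>* u v" using conn by (simp add: connected_graph_def)
      then show ?thesis by (induction rule: rtranclp_induct) (auto dest: adjeq)
    qed
    have "(\<Sum>i\<in>UNIV. x$i) = (\<Sum>i\<in>(UNIV::'v set). x$u)" using allu by (intro sum.cong) auto
    then have "(\<Sum>i\<in>UNIV. x$i) = real CARD('v) * x$u" by simp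
    then have "x$u = 0" using z2 by simp
    then have "x = 0" using allu by (simp add: vec_eq_iff)
    then show False using x by simp
  qed
qed



definition Qm :: "'v::finite set set \<Rightarrow> real \<Rightarrow> 'v set set \<Rightarrow> real^'v^'v" where
  "Qm E q U = laplacian E (kappa q (\<lambda>e. e \<in> U)) + Jn"

lemma detH0_Qm: "detH0 E (kappa q (\<lambda>e. e \<in> U)) = det (Qm E q U)"
  by (simp add: detH0_def Qm_def Jn_def)

lemma Q_pdm: "connected_graph E \<Longrightarrow> 1 \<le> q \<Longrightarrow> pdm (Qm E q U)"
  unfolding Qm_def by (rule lap_pdm) (auto simp: kappa_def)

lemma Q_sym: "transpose (Qm E q U) = Qm E q U"
  unfolding Qm_def by (rule lap_sym)

lemma Q_mono:
  assumes "graph E" "1 \<le> q" "U \<subseteq> U'"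
  shows "x \<bullet> (Qm E q U *v x) \<le> x \<bullet> (Qm E q U' *v x)"
  unfolding Qm_def quad_lap[OF assms(1)]
proof -
  have "(\<Sum>e\<in>E. kappa q (\<lambda>e. e \<in> U) e * (x \<bullet> (Bm e *v x))) \<le> (\<Sum>e\<in>E. kappa q (\<lambda>e. e \<in> U') e * (x \<bullet> (Bm e *v x)))"
    using assms by (intro sum_mono mult_right_mono quad_Bm_nonneg) (auto simp: kappa_def)
  then show "(\<Sum>e\<in>E. kappa q (\<lambda>e. e \<in> U) e * (x \<bullet> (Bm e *v x))) + (\<Sum>i\<in>UNIV. x $ i)\<^sup>2 / real CARD('a) \<le>
    (\<Sum>e\<in>E. kappa q (\<lambda>e. e \<in> U') e * (x \<bullet> (Bm e *v x))) + (\<Sum>i\<in>UNIV. x $ i)\<^sup>2 / real CARD('a)" by simp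
qed

lemma Q_insert:
  assumes "graph E" "r \<in> E" "r \<notin> U" "r = {a,b}" "a \<noteq> b"
  shows "Qm E q (insert r U) = Qm E q U + (q - 1) *\<^sub>R (\<chi> i j. bvec a b $ i * bvec a b $ j)"
proof -
  have "(\<Sum>e\<in>E. kappa q (\<lambda>e. e \<in> insert r U) e *\<^sub>R Bm e) =
      (\<Sum>e\<in>E. kappa q (\<lambda>e. e \<in> U) e *\<^sub>R Bm e + (if e = r then (q - 1) *\<^sub>R Bm r else 0))"
    by (rule sum.cong) (use assms(3) in \<open>auto simp: kappa_def algebra_simps\<close>)
  also have "\<dots> = (\<Sum>e\<in>E. kappa q (\<lambda>e. e \<in> U) e *\<^sub>R Bm e) + (q - 1) *\<^sub>R Bm r"
    using assms(2) by (simp add: sum.distrib sum.delta')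
  finally have "(\<Sum>e\<in>E. kappa q (\<lambda>e. e \<in> insert r U) e *\<^sub>R Bm e) =
      (\<Sum>e\<in>E. kappa q (\<lambda>e. e \<in> U) e *\<^sub>R Bm e) + (q - 1) *\<^sub>R Bm r" .
  then show ?thesis
    unfolding Qm_def lap_sum[OF assms(1)] using Bm_outer[OF assms(5)] assms(4) by (simp add: algebra_simps)
qed

lemma D_insert:
  assumes "connected_graph E" "1 \<le> q" "r \<in> E" "r \<notin> U" "r = {a,b}" "a \<noteq> b"
    and z: "Qm E q U *v z = bvec a b"
  shows "det (Qm E q (insert r U)) = det (Qm E q U) * (1 + (q - 1) * (bvec a b \<bullet> z))"
proof -
  have g: "graph E" using assms(1) by (simp add: connected_graph_def)
  have "det (Qm E q (insert r U)) = det (Qm E q U) + (q - 1) *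
      (det (\<chi> i. if i = a then bvec a b else row i (Qm E q U)) - det (\<chi> i. if i = b then bvec a b else row i (Qm E q U)))"
    unfolding Q_insert[OF g assms(3-6)] bvec_def using rank_one_det[OF assms(6), of "Qm E q U" "q - 1"]
    by simp
  also have "\<dots> = det (Qm E q U) * (1 + (q - 1) * (bvec a b \<bullet> z))"
    unfolding cramer_row[OF Q_sym z] bvec_inner[OF assms(6)] by (simp add: algebra_simps)
  finally show ?thesis .
qed

lemma D_ratio:
  assumes conn: "connected_graph E" and q: "1 \<le> q" and UU: "U \<subseteq> U'" and r: "r \<in> E" "r \<notin> U'"
  shows "det (Qm E q (insert r U')) * det (Qm E q U) \<le> det (Qm E q (insert r U)) * det (Qm E q U')"
proof -
  have g: "graph E" using conn by (simp add: connected_graph_def)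
  obtain a b where ab: "r = {a,b}" "a \<noteq> b" using r g card2_edge by (force simp: graph_def)
  obtain z where z: "Qm E q U *v z = bvec a b" using pdm_solve[OF Q_pdm[OF conn q]] by blast
  obtain z' where z': "Qm E q U' *v z' = bvec a b" using pdm_solve[OF Q_pdm[OF conn q]] by blast
  have rU: "r \<notin> U" using r UU by auto
  have v: "bvec a b \<bullet> z' \<le> bvec a b \<bullet> z"
    by (rule variational[OF Q_sym Q_pdm[OF conn q] Q_mono[OF g q UU] z z'])
  have p1: "det (Qm E q U) > 0" "det (Qm E q U') > 0" using pdm_det_pos Q_pdm[OF conn q] by auto
  have "det (Qm E q (insert r U')) * det (Qm E q U) = det (Qm E q U') * det (Qm E q U) * (1 + (q - 1) * (bvec a b \<bullet> z'))"
    unfolding D_insert[OF conn q r ab z'] by (simp add: algebra_simps)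
  also have "\<dots> \<le> det (Qm E q U') * det (Qm E q U) * (1 + (q - 1) * (bvec a b \<bullet> z))"
    using p1 q v by (intro mult_left_mono add_left_mono) auto
  also have "\<dots> = det (Qm E q (insert r U)) * det (Qm E q U')"
    unfolding D_insert[OF conn q r(1) rU ab z] by (simp add: algebra_simps)
  finally show ?thesis .
qed

lemma D_lattice_aux:
  assumes conn: "connected_graph E" and q: "1 \<le> q" and fin: "finite R"
  shows "R \<inter> S = {} \<Longrightarrow> W \<subseteq> S \<Longrightarrow> R \<subseteq> E \<Longrightarrow>
    det (Qm E q (S \<union> R)) * det (Qm E q W) \<le> det (Qm E q S) * det (Qm E q (W \<union> R))"
  using fin
proof (induction R rule: finite_induct)
  case empty
  then show ?case by (simp add: mult.commute)
next
  case (insert r R)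
  have pos: "det (Qm E q X) > 0" for X using pdm_det_pos Q_pdm[OF conn q] by auto
  have IH: "det (Qm E q (S \<union> R)) * det (Qm E q W) \<le> det (Qm E q S) * det (Qm E q (W \<union> R))"
    using insert by auto
  have rat: "det (Qm E q (insert r (S \<union> R))) * det (Qm E q (W \<union> R)) \<le> det (Qm E q (insert r (W \<union> R))) * det (Qm E q (S \<union> R))"
    using insert by (intro D_ratio[OF conn q]) auto
  have e1: "S \<union> insert r R = insert r (S \<union> R)" "W \<union> insert r R = insert r (W \<union> R)" by auto
  define A where "A = det (Qm E q (insert r (S \<union> R)))"
  define B where "B = det (Qm E q (W \<union> R))"
  define C where "C = det (Qm E q (insert r (W \<union> R)))"
  define F where "F = det (Qm E q (S \<union> R))"
  define G where "G = det (Qm E q W)"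
  define H where "H = det (Qm E q S)"
  have pos': "B > 0" "F > 0" "G > 0" "H > 0" "A > 0" "C > 0" unfolding A_def B_def C_def F_def G_def H_def using pos by auto
  have rat': "A * B \<le> C * F" using rat unfolding A_def B_def C_def F_def .
  have IH': "F * G \<le> H * B" using IH unfolding B_def F_def G_def H_def by (simp add: mult.commute)
  have "A * G * (B * F) = (A * B) * (F * G)" by (simp add: algebra_simps)
  also have "\<dots> \<le> (C * F) * (H * B)" by (rule mult_mono[OF rat' IH']) (use pos' in auto)
  also have "\<dots> = H * C * (B * F)" by (simp add: algebra_simps)
  finally have "A * G \<le> H * C" using pos' by (simp add: mult_le_cancel_right)
  then show ?case unfolding e1 A_def C_def G_def H_def .
qed

lemma D_lattice:
  assumes conn: "connected_graph E" and q: "1 \<le> q" and "T \<subseteq> E"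
  shows "det (Qm E q (S \<union> T)) * det (Qm E q (S \<inter> T)) \<le> det (Qm E q S) * det (Qm E q T)"
proof -
  have "finite (T - S)" by simp
  from D_lattice_aux[OF conn q this, of S "S \<inter> T"] assms(3)
  have "det (Qm E q (S \<union> (T - S))) * det (Qm E q (S \<inter> T)) \<le> det (Qm E q S) * det (Qm E q (S \<inter> T \<union> (T - S)))"
    by auto
  moreover have "S \<union> (T - S) = S \<union> T" "S \<inter> T \<union> (T - S) = T" by auto
  ultimately show ?thesis by simp
qed



definition phi :: "'v set set \<Rightarrow> 'v set \<Rightarrow> bool" where "phi U = (\<lambda>e. e \<in> U)"

lemma phi_bij: "bij_betw phi (Pow E) (configs E)"
proof (rule bij_betwI')
  show "phi x = phi y \<longleftrightarrow> x = y" for x y by (auto simp: phi_def fun_eq_iff)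
  show "x \<in> Pow E \<Longrightarrow> phi x \<in> configs E" for x by (auto simp: phi_def configs_def)
  fix \<omega> assume "\<omega> \<in> configs E"
  then have "\<omega> = phi {e\<in>E. \<omega> e}" "{e\<in>E. \<omega> e} \<in> Pow E" by (auto simp: phi_def configs_def fun_eq_iff)
  then show "\<exists>x\<in>Pow E. \<omega> = phi x" by blast
qed

lemma sum_configs: "(\<Sum>\<omega>\<in>configs E. g \<omega>) = (\<Sum>U\<in>Pow E. g (phi U))"
  using sum.reindex_bij_betw[OF phi_bij, of g] by simp

lemma weight_phi:
  assumes "U \<subseteq> E"
  shows "weight E q p (phi U) = (\<Prod>e\<in>E. if e \<in> U then p else 1 - p) / sqrt (det (Qm E q U))"
proof -
  have "{e\<in>E. phi U e} = U" "{e\<in>E. \<not> phi U e} = E - U" using assms by (auto simp: phi_def)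
  moreover have "(\<Prod>e\<in>E. if e \<in> U then p else 1 - p) = p ^ card U * (1 - p) ^ card (E - U)"
    using assms by (simp add: prod.If_cases Int_absorb1 Diff_eq)
  ultimately show ?thesis unfolding weight_def detH0_Qm[symmetric] by (simp add: phi_def)
qed

lemma weight_nonneg:
  assumes "connected_graph E" "1 \<le> q" "0 \<le> p" "p \<le> 1" "U \<subseteq> E"
  shows "0 \<le> weight E q p (phi U)"
  unfolding weight_phi[OF assms(5)] using assms pdm_det_pos[OF Q_pdm[OF assms(1,2)]]
  by (intro divide_nonneg_nonneg prod_nonneg) (auto intro: less_imp_le)

lemma holley_cond:
  fixes E :: "'v::finite set set"
  assumes conn: "connected_graph E" and q: "1 \<le> q" and p: "0 \<le> p" "p \<le> p'" "p' \<le> 1"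
    and S: "S \<subseteq> E" and T: "T \<subseteq> E"
  shows "weight E q p (phi S) * weight E q p' (phi T) \<le> weight E q p' (phi (S \<union> T)) * weight E q p (phi (S \<inter> T))"
proof -
  have ST: "S \<union> T \<subseteq> E" "S \<inter> T \<subseteq> E" using S T by auto
  define f where "f r X e = (if e \<in> X then r else 1 - r)" for r :: real and X and e :: "'v set"
  have P: "(\<Prod>e\<in>E. f p S e) * (\<Prod>e\<in>E. f p' T e) \<le> (\<Prod>e\<in>E. f p' (S \<union> T) e) * (\<Prod>e\<in>E. f p (S \<inter> T) e)"
    unfolding prod.distrib[symmetric]
  proof (rule prod_mono)
    fix e assume "e \<in> E"
    have "p * (1 - p') \<le> p' * (1 - p)" using p by (simp add: algebra_simps)
    then show "0 \<le> f p S e * f p' T e \<and> f p S e * f p' T e \<le> f p' (S \<union> T) e * f p (S \<inter> T) e"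
      using p unfolding f_def by (auto simp: mult.commute)
  qed
  have P2: "0 \<le> (\<Prod>e\<in>E. f p' (S \<union> T) e) * (\<Prod>e\<in>E. f p (S \<inter> T) e)"
    using p unfolding f_def by (intro mult_nonneg_nonneg prod_nonneg) auto
  have pos: "det (Qm E q X) > 0" for X using pdm_det_pos Q_pdm[OF conn q] by auto
  have Dl: "det (Qm E q (S \<union> T)) * det (Qm E q (S \<inter> T)) \<le> det (Qm E q S) * det (Qm E q T)"
    by (rule D_lattice[OF conn q T])
  have R: "1 / sqrt (det (Qm E q S) * det (Qm E q T)) \<le> 1 / sqrt (det (Qm E q (S \<union> T)) * det (Qm E q (S \<inter> T)))"
    using Dl pos by (intro divide_left_mono real_sqrt_le_mono mult_pos_pos real_sqrt_gt_zero) auto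
  have "weight E q p (phi S) * weight E q p' (phi T) =
      ((\<Prod>e\<in>E. f p S e) * (\<Prod>e\<in>E. f p' T e)) * (1 / sqrt (det (Qm E q S) * det (Qm E q T)))"
    unfolding weight_phi[OF S] weight_phi[OF T] f_def using pos[of S] pos[of T] by (simp add: real_sqrt_mult)
  also have "\<dots> \<le> ((\<Prod>e\<in>E. f p' (S \<union> T) e) * (\<Prod>e\<in>E. f p (S \<inter> T) e)) * (1 / sqrt (det (Qm E q (S \<union> T)) * det (Qm E q (S \<inter> T))))"
    by (rule mult_mono[OF P R P2]) (use pos[of S] pos[of T] in simp)
  also have "\<dots> = weight E q p' (phi (S \<union> T)) * weight E q p (phi (S \<inter> T))"
    unfolding weight_phi[OF ST(1)] weight_phi[OF ST(2)] f_def by (simp add: real_sqrt_mult)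
  finally show ?thesis .
qed



lemma denom_pos:
  assumes conn: "connected_graph E" and q: "1 \<le> q" and p: "0 \<le> p" "p \<le> 1"
  shows "0 < (\<Sum>\<omega>\<in>configs E. weight E q p \<omega>)"
proof -
  have pos: "det (Qm E q X) > 0" for X using pdm_det_pos Q_pdm[OF conn q] by auto
  obtain U where U: "U \<subseteq> E" "0 < weight E q p (phi U)"
  proof (cases "p = 1")
    case True
    show ?thesis
      by (rule that[of E]) (use True pos in \<open>simp_all add: weight_phi\<close>)
  next
    case False
    then have "0 < 1 - p" using p by simp
    then show ?thesis
      by (intro that[of "{}"]) (use pos in \<open>simp_all add: weight_phi prod_pos\<close>)
  qed
  show ?thesis unfolding sum_configs
    by (rule sum_pos2[of "Pow E" U]) (use U weight_nonneg[OF conn q p] in auto)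
qed

theorem lemma4p7:
  fixes E :: "'v::finite set set" and q p p' :: real
  assumes "connected_graph E"
    and "q \<ge> 1" and "0 \<le> p" and "p \<le> p'" and "p' \<le> 1"
    and "increasing_event E A"
  shows "prob_event E q p A \<le> prob_event E q p' A"
proof -
  note conn = assms(1) and q = assms(2)
  have p1: "0 \<le> p" "p \<le> 1" and p2: "0 \<le> p'" "p' \<le> 1" using assms by auto
  have Asub: "A \<subseteq> configs E" using assms(6) by (simp add: increasing_event_def)
  define \<alpha> where "\<alpha> U = (if phi U \<in> A then weight E q p (phi U) else 0)" for U
  define \<beta> where "\<beta> U = weight E q p' (phi U)" for U
  define \<gamma> where "\<gamma> U = (if phi U \<in> A then weight E q p' (phi U) else 0)" for U
  define \<delta> where "\<delta> U = weight E q p (phi U)" for U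
  have main: "(\<Sum>S\<in>Pow E. \<alpha> S) * (\<Sum>S\<in>Pow E. \<beta> S) \<le> (\<Sum>S\<in>Pow E. \<gamma> S) * (\<Sum>S\<in>Pow E. \<delta> S)"
  proof (rule four_functions)
    show "finite E" by simp
    fix S assume S: "S \<subseteq> E"
    show "0 \<le> \<alpha> S" "0 \<le> \<beta> S" "0 \<le> \<gamma> S" "0 \<le> \<delta> S"
      unfolding \<alpha>_def \<beta>_def \<gamma>_def \<delta>_def using weight_nonneg[OF conn q p1 S] weight_nonneg[OF conn q p2 S] by auto
  next
    fix S T assume S: "S \<subseteq> E" and T: "T \<subseteq> E"
    have ST: "S \<union> T \<subseteq> E" "S \<inter> T \<subseteq> E" using S T by auto
    show "\<alpha> S * \<beta> T \<le> \<gamma> (S \<union> T) * \<delta> (S \<inter> T)"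
    proof (cases "phi S \<in> A")
      case True
      have "phi (S \<union> T) \<in> configs E" using ST by (auto simp: phi_def configs_def)
      moreover have "phi S \<le> phi (S \<union> T)" by (auto simp: phi_def le_fun_def)
      ultimately have "phi (S \<union> T) \<in> A" using assms(6) True unfolding increasing_event_def by blast
      then show ?thesis using True holley_cond[OF conn q assms(3-5) S T]
        unfolding \<alpha>_def \<beta>_def \<gamma>_def \<delta>_def by simp
    next
      case False
      then show ?thesis unfolding \<alpha>_def \<gamma>_def \<delta>_def
        using weight_nonneg[OF conn q p1 ST(2)] weight_nonneg[OF conn q p2 ST(1)] by simp
    qed
  qed
  have sA: "(\<Sum>\<omega>\<in>A \<inter> configs E. weight E q r \<omega>) = (\<Sum>U\<in>Pow E. if phi U \<in> A then weight E q r (phi U) else 0)" for r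
  proof -
    have "(\<Sum>\<omega>\<in>A \<inter> configs E. weight E q r \<omega>) = (\<Sum>\<omega>\<in>configs E. if \<omega> \<in> A then weight E q r \<omega> else 0)"
      by (simp add: sum.If_cases Int_commute)
    then show ?thesis unfolding sum_configs .
  qed
  define a1 where "a1 = (\<Sum>\<omega>\<in>A \<inter> configs E. weight E q p \<omega>)"
  define a2 where "a2 = (\<Sum>\<omega>\<in>A \<inter> configs E. weight E q p' \<omega>)"
  define b1 where "b1 = (\<Sum>\<omega>\<in>configs E. weight E q p \<omega>)"
  define b2 where "b2 = (\<Sum>\<omega>\<in>configs E. weight E q p' \<omega>)"
  have ineq: "a1 * b2 \<le> a2 * b1" using main unfolding a1_def a2_def b1_def b2_def sA sum_configs
    \<alpha>_def \<beta>_def \<gamma>_def \<delta>_def .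
  have b1: "0 < b1" unfolding b1_def by (rule denom_pos[OF conn q p1])
  have b2: "0 < b2" unfolding b2_def by (rule denom_pos[OF conn q p2])
  have "a1 / b1 \<le> a2 / b2" using ineq b1 b2 by (simp add: divide_le_eq le_divide_eq field_simps)
  then show ?thesis unfolding prob_event_def a1_def a2_def b1_def b2_def .
qed


end
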